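(* Let $A=\{(x_k,y_k):k\in[\ell]\}\subset\mathbb N^d$ be finite, $d=m+n$. Then for all $\bar k\in[\ell]$: (a) $\mathbb D_{\mathrm{in}}(x_{\bar k},y_{\bar k},T_F(A))=\mathbb D_{\mathrm{in}}(x_{\bar k},y_{\bar k},Z_F(A))$; (b) $\mathbb D_{\mathrm{out}}(x_{\bar k},y_{\bar k},T_F(A))=\mathbb D_{\mathrm{out}}(x_{\bar k},y_{\bar k},Z_F(A))$.
   Context: $\mathbb N$ is the set of non-negative integers; $[\ell]=\{1,\dots,\ell\}$; $K=\mathbb{R}_+^m\times(-\mathbb{R}_+^n)$. FDH technology $T_F(A)=(A+K)\cap\mathbb{R}_+^d$ and its discrete version $Z_F(A)=(A+K)\cap\mathbb N^d$. Translation distance functions: $\mathbb D_{\mathrm{in}}(x,y,T)=\sup\{\delta\in\mathbb{R}:(x-\delta1\!\!1_m,y)\in T\}$, $\mathbb D_{\mathrm{out}}(x,y,T)=\sup\{\delta\in\mathbb{R}:(x,y+\delta1\!\!1_n)\in T\}$, where $1\!\!1$ denotes a vector of ones. *)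

theory Defs
  imports "HOL-Analysis.Analysis" "HOL-Library.Extended_Real"
begin

text \<open>Points of R^d, d = m + n, are pairs (x,y) with x in R^m (inputs), y in R^n (outputs).\<close>

definition ones :: "real^'k" where
  "ones = (\<chi> i. 1)"

definition coneK :: "((real^'m) \<times> (real^'n)) set" where
  "coneK = {(a, b). (\<forall>i. 0 \<le> a $ i) \<and> (\<forall>j. b $ j \<le> 0)}"

definition nonneg_orthant :: "((real^'m) \<times> (real^'n)) set" where
  "nonneg_orthant = {(u, v). (\<forall>i. 0 \<le> u $ i) \<and> (\<forall>j. 0 \<le> v $ j)}"

definition nat_lattice :: "((real^'m) \<times> (real^'n)) set" where
  "nat_lattice = {(u, v). (\<forall>i. u $ i \<in> \<nat>) \<and> (\<forall>j. v $ j \<in> \<nat>)}"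

definition plusK :: "((real^'m) \<times> (real^'n)) set \<Rightarrow> ((real^'m) \<times> (real^'n)) set" where
  "plusK A = {(x + a, y + b) | x y a b. (x, y) \<in> A \<and> (a, b) \<in> coneK}"

definition T_F :: "((real^'m) \<times> (real^'n)) set \<Rightarrow> ((real^'m) \<times> (real^'n)) set" where
  "T_F A = plusK A \<inter> nonneg_orthant"

definition Z_F :: "((real^'m) \<times> (real^'n)) set \<Rightarrow> ((real^'m) \<times> (real^'n)) set" where
  "Z_F A = plusK A \<inter> nat_lattice"

definition D_in :: "real^'m \<Rightarrow> real^'n \<Rightarrow> ((real^'m) \<times> (real^'n)) set \<Rightarrow> ereal" where
  "D_in x y T = Sup {ereal \<delta> | \<delta>. (x - \<delta> *\<^sub>R ones, y) \<in> T}"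

definition D_out :: "real^'m \<Rightarrow> real^'n \<Rightarrow> ((real^'m) \<times> (real^'n)) set \<Rightarrow> ereal" where
  "D_out x y T = Sup {ereal \<delta> | \<delta>. (x, y + \<delta> *\<^sub>R ones) \<in> T}"

end

theory Submission
  imports Defs
begin

lemma nat_real_ceil:
  fixes r :: real
  assumes "r \<in> \<nat>" "s \<in> \<nat>" "\<delta> \<le> r - s"
  shows "real_of_int \<lceil>\<delta>\<rceil> \<le> r - s"
proof -
  obtain p q where "r = real p" "s = real q" using assms Nats_cases by metis
  then have "r - s = real_of_int (int p - int q)" by simp
  then show ?thesis using assms(3) by (metis ceiling_le_iff of_int_le_iff)
qed

lemma nat_real_ceil_nat:
  fixes r :: real
  assumes "r \<in> \<nat>" "\<delta> \<le> r"
  shows "r - real_of_int \<lceil>\<delta>\<rceil> \<in> \<nat>"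
proof -
  obtain p where p: "r = real p" using assms Nats_cases by metis
  have "\<lceil>\<delta>\<rceil> \<le> int p" using assms p by (simp add: ceiling_le_iff)
  then have "r - real_of_int \<lceil>\<delta>\<rceil> = real (nat (int p - \<lceil>\<delta>\<rceil>))" using p by simp
  then show ?thesis by simp
qed

lemma nat_real_ceil_nat2:
  fixes r :: real
  assumes "r \<in> \<nat>" "-\<delta> \<le> r"
  shows "r + real_of_int \<lceil>\<delta>\<rceil> \<in> \<nat>"
proof -
  obtain p where p: "r = real p" using assms Nats_cases by metis
  have "\<delta> \<le> real_of_int \<lceil>\<delta>\<rceil>" by (rule le_of_int_ceiling)
  then have "0 \<le> int p + \<lceil>\<delta>\<rceil>" using assms p by linarith
  then have "r + real_of_int \<lceil>\<delta>\<rceil> = real (nat (int p + \<lceil>\<delta>\<rceil>))" using p by simp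
  then show ?thesis by simp
qed

lemma sup_eq_lemma:
  assumes "\<And>d. Q d \<Longrightarrow> P d" "\<And>d. P d \<Longrightarrow> \<exists>d'. Q d' \<and> d \<le> d'"
  shows "Sup {ereal d | d. P d} = Sup {ereal d | d. Q d}"
proof (rule antisym)
  show "Sup {ereal d | d. Q d} \<le> Sup {ereal d | d. P d}"
    by (rule Sup_subset_mono) (use assms(1) in blast)
  show "Sup {ereal d | d. P d} \<le> Sup {ereal d | d. Q d}"
  proof (rule Sup_least)
    fix z assume "z \<in> {ereal d | d. P d}"
    then obtain d where "z = ereal d" "P d" by blast
    then obtain d' where "Q d'" "d \<le> d'" using assms(2) by blast
    then have "ereal d' \<in> {ereal d | d. Q d}" by blast
    then have "ereal d' \<le> Sup {ereal d | d. Q d}" by (rule Sup_upper)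
    then show "z \<le> Sup {ereal d | d. Q d}" using \<open>z = ereal d\<close> \<open>d \<le> d'\<close>
      by (metis ereal_less_eq(3) order_trans)
  qed
qed

lemma nat_sub_nonneg: "(r::real) \<in> \<nat> \<Longrightarrow> 0 \<le> r"
  by (auto elim: Nats_cases)

lemma ZT: "Z_F A \<subseteq> T_F A"
  unfolding Z_F_def T_F_def nat_lattice_def nonneg_orthant_def
  using nat_sub_nonneg by auto

theorem mainTheorem10:
  fixes A :: "((real^'m) \<times> (real^'n)) set"
  assumes "finite A" and "A \<subseteq> nat_lattice"
  shows "\<forall>(x, y) \<in> A.
           D_in x y (T_F A) = D_in x y (Z_F A) \<and>
           D_out x y (T_F A) = D_out x y (Z_F A)"
proof (clarify)
  fix x y assume xy: "(x, y) \<in> A"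
  then have xN: "\<And>i. x $ i \<in> \<nat>" and yN: "\<And>j. y $ j \<in> \<nat>"
    using assms(2) unfolding nat_lattice_def by auto
  have in1: "(x - real_of_int \<lceil>d\<rceil> *\<^sub>R ones, y) \<in> Z_F A"
    if "(x - d *\<^sub>R ones, y) \<in> T_F A" for d
  proof -
    from that have P1: "(x - d *\<^sub>R ones, y) \<in> plusK A"
      and P2: "(x - d *\<^sub>R ones, y) \<in> nonneg_orthant" unfolding T_F_def by auto
    from P1 obtain x' y' a b where AA0: "(x', y') \<in> A" "x - d *\<^sub>R ones = x' + a"
      "y = y' + b" "(a, b) \<in> coneK"
      unfolding plusK_def by blast
    from P2 have "\<forall>i. 0 \<le> (x - d *\<^sub>R ones) $ i" unfolding nonneg_orthant_def by simp
    note AA = AA0 this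
    have x'N: "\<And>i. x' $ i \<in> \<nat>" using AA(1) assms(2) unfolding nat_lattice_def by auto
    have a: "d \<le> x $ i - x' $ i" for i
    proof -
      have "(x - d *\<^sub>R ones) $ i = (x' + a) $ i" using AA(2) by simp
      then have "x $ i - d = x' $ i + a $ i" by (simp add: ones_def)
      moreover have "0 \<le> a $ i" using AA(4) by (simp add: coneK_def)
      ultimately show ?thesis by linarith
    qed
    have c: "\<And>i. d \<le> x $ i" using AA(5) by (auto simp: ones_def)
    let ?a = "x - real_of_int \<lceil>d\<rceil> *\<^sub>R ones - x'"
    have "(?a, b) \<in> coneK"
    proof -
      have "real_of_int \<lceil>d\<rceil> \<le> x $ i - x' $ i" for i using nat_real_ceil[OF xN x'N a] .
      then show ?thesis using AA(4) by (auto simp: coneK_def ones_def algebra_simps)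
    qed
    moreover have "(x - real_of_int \<lceil>d\<rceil> *\<^sub>R ones, y) \<in> nat_lattice"
      using nat_real_ceil_nat[OF xN c] yN by (auto simp: nat_lattice_def ones_def)
    moreover have "(x - real_of_int \<lceil>d\<rceil> *\<^sub>R ones, y) = (x' + ?a, y' + b)"
      using AA(3) by simp
    ultimately show ?thesis using AA(1) unfolding Z_F_def plusK_def by blast
  qed
  have out1: "(x, y + real_of_int \<lceil>d\<rceil> *\<^sub>R ones) \<in> Z_F A"
    if "(x, y + d *\<^sub>R ones) \<in> T_F A" for d
  proof -
    from that have P1: "(x, y + d *\<^sub>R ones) \<in> plusK A"
      and P2: "(x, y + d *\<^sub>R ones) \<in> nonneg_orthant" unfolding T_F_def by auto
    from P1 obtain x' y' a b where AA0: "(x', y') \<in> A" "x = x' + a"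
      "y + d *\<^sub>R ones = y' + b" "(a, b) \<in> coneK"
      unfolding plusK_def by blast
    from P2 have "\<forall>i. 0 \<le> (y + d *\<^sub>R ones) $ i" unfolding nonneg_orthant_def by simp
    note AA = AA0 this
    have y'N: "\<And>i. y' $ i \<in> \<nat>" using AA(1) assms(2) unfolding nat_lattice_def by auto
    have a: "d \<le> y' $ i - y $ i" for i
    proof -
      have "(y + d *\<^sub>R ones) $ i = (y' + b) $ i" using AA(3) by simp
      then have "y $ i + d = y' $ i + b $ i" by (simp add: ones_def)
      moreover have "b $ i \<le> 0" using AA(4) by (simp add: coneK_def)
      ultimately show ?thesis by linarith
    qed
    have c: "-d \<le> y $ i" for i
    proof -
      have "0 \<le> y $ i + d" using AA(5) by (simp add: ones_def)
      then show ?thesis by linarith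
    qed
    let ?b = "y + real_of_int \<lceil>d\<rceil> *\<^sub>R ones - y'"
    have "(a, ?b) \<in> coneK"
    proof -
      have "real_of_int \<lceil>d\<rceil> \<le> y' $ i - y $ i" for i using nat_real_ceil[OF y'N yN a] .
      then show ?thesis using AA(4) by (auto simp: coneK_def ones_def algebra_simps)
    qed
    moreover have "(x, y + real_of_int \<lceil>d\<rceil> *\<^sub>R ones) \<in> nat_lattice"
      using nat_real_ceil_nat2[OF yN c] xN by (auto simp: nat_lattice_def ones_def)
    moreover have "(x, y + real_of_int \<lceil>d\<rceil> *\<^sub>R ones) = (x' + a, y' + ?b)"
      using AA(2) by simp
    ultimately show ?thesis using AA(1) unfolding Z_F_def plusK_def by blast
  qed
  show "D_in x y (T_F A) = D_in x y (Z_F A) \<and> D_out x y (T_F A) = D_out x y (Z_F A)"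
    unfolding D_in_def D_out_def
  proof
    show "Sup {ereal \<delta> |\<delta>. (x - \<delta> *\<^sub>R ones, y) \<in> T_F A} = Sup {ereal \<delta> |\<delta>. (x - \<delta> *\<^sub>R ones, y) \<in> Z_F A}"
      by (rule sup_eq_lemma) (use ZT in blast, use in1 in fastforce)
    show "Sup {ereal \<delta> |\<delta>. (x, y + \<delta> *\<^sub>R ones) \<in> T_F A} = Sup {ereal \<delta> |\<delta>. (x, y + \<delta> *\<^sub>R ones) \<in> Z_F A}"
      by (rule sup_eq_lemma) (use ZT in blast, use out1 in fastforce)
  qed
qed

end
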